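(* Let $M, K, P, N$ be positive integers with $1 < M \le K \le P$. Then there exists a matrix $\mathbf{A} \in \mathbb{R}^{M \times N}$ such that every matrix $\mathbf{F} \in \mathbb{R}^{P \times N}$ with the property that, for every set $\chi \subseteq \{1,\ldots,P\}$ with $|\chi| = K$, the rows of $\mathbf{F}$ indexed by $\chi$ span all the rows of $\mathbf{A}$, has average row sparsity satisfying $$\bar{s} > \frac{N}{P}(P-K+M) - \frac{M^2}{P}\binom{P}{K-M+1}.$$ Moreover, if $N$ is sufficiently large that $M^2\binom{P}{K-M+1} = o(N)$, then $$\bar{s} > \frac{N}{P}(P-K+M) - o\!\left(\frac{N}{P}\right).$$
   Context: The sparsity of a vector is its number of nonzero entries; $\bar{s} = \frac{1}{P}\sum_{i=1}^P \|\mathbf{f}_i\|_0$, where $\mathbf{f}_i^T$ is the $i$-th row of $\mathbf{F}$ and $\|\cdot\|_0$ counts nonzero entries. *)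

theory Defs
  imports Complex_Main "HOL-Library.Landau_Symbols"
begin

(* Matrices are functions nat => nat => real; an M x N matrix uses rows 0..<M, columns 0..<N.
   Row index set {1..P} of the paper is rendered as {0..<P}. *)

definition row_sparsity :: "(nat \<Rightarrow> nat \<Rightarrow> real) \<Rightarrow> nat \<Rightarrow> nat \<Rightarrow> nat" where
  "row_sparsity F N p = card {j. j < N \<and> F p j \<noteq> 0}"

definition avg_sparsity :: "(nat \<Rightarrow> nat \<Rightarrow> real) \<Rightarrow> nat \<Rightarrow> nat \<Rightarrow> real" where
  "avg_sparsity F P N = (\<Sum>p<P. real (row_sparsity F N p)) / real P"

definition rows_span :: "(nat \<Rightarrow> nat \<Rightarrow> real) \<Rightarrow> nat set \<Rightarrow> (nat \<Rightarrow> nat \<Rightarrow> real) \<Rightarrow> nat \<Rightarrow> nat \<Rightarrow> bool" where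
  "rows_span F chi A M N = (\<forall>i<M. \<exists>c :: nat \<Rightarrow> real. \<forall>j<N. A i j = (\<Sum>p\<in>chi. c p * F p j))"

definition K_recovers :: "(nat \<Rightarrow> nat \<Rightarrow> real) \<Rightarrow> (nat \<Rightarrow> nat \<Rightarrow> real) \<Rightarrow> nat \<Rightarrow> nat \<Rightarrow> nat \<Rightarrow> nat \<Rightarrow> bool" where
  "K_recovers A F M K P N = (\<forall>chi. chi \<subseteq> {..<P} \<and> card chi = K \<longrightarrow> rows_span F chi A M N)"

end

theory Submission imports Defs "HOL-Library.Landau_Symbols" "HOL-Library.Function_Algebras" "HOL-Computational_Algebra.Polynomial" begin

lemma vander_zero:
  fixes lam :: "nat \<Rightarrow> real"
  assumes "finite J" "card J \<ge> M" "\<forall>j\<in>J. (\<Sum>i<M. lam i * real j ^ i) = 0"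
  shows "\<forall>i<M. lam i = 0"
proof -
  define p where "p = (\<Sum>i<M. monom (lam i) i)"
  have cp: "coeff p k = (if k < M then lam k else 0)" for k
    unfolding p_def coeff_sum coeff_monom by (auto simp: sum.delta)
  have pp: "poly p x = (\<Sum>i<M. lam i * x ^ i)" for x
    unfolding p_def poly_sum poly_monom by simp
  have "p = 0"
  proof (rule ccontr)
    assume nz: "p \<noteq> 0"
    have "M > 0"
    proof (rule ccontr)
      assume "\<not> M > 0"
      then have "p = 0" using cp by (intro poly_eqI) auto
      then show False using nz by simp
    qed
    have "degree p \<le> M - 1" by (rule degree_le) (auto simp: cp)
    have sub: "real ` J \<subseteq> {x. poly p x = 0}" using assms(3) pp by auto
    have "card (real ` J) \<le> card {x. poly p x = 0}"
      by (rule card_mono[OF poly_roots_finite[OF nz] sub])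
    also have "\<dots> \<le> degree p" by (rule card_poly_roots_bound[OF nz])
    finally have "card J \<le> M - 1" using card_image[of real J] \<open>degree p \<le> M - 1\<close> by (simp add: inj_on_def)
    then show False using assms(2) \<open>M > 0\<close> by linarith
  qed
  then show ?thesis using cp by (metis coeff_0)
qed

interpretation fv: vector_space "\<lambda>(c::real) (f::nat\<Rightarrow>real). (\<lambda>j. c * f j)"
  by unfold_locales (auto simp: plus_fun_def algebra_simps fun_eq_iff)

lemma fsum_apply: "(\<Sum>x\<in>A. f x) (j::nat) = (\<Sum>x\<in>A. (f x j :: real))"
  by (induction A rule: infinite_finite_induct) (auto simp: plus_fun_def)

lemma rank_lemma:
  fixes G c :: "nat \<Rightarrow> nat \<Rightarrow> real"
  assumes "finite J" "card J \<ge> M" "finite R" "card R < M"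
    and eq: "\<forall>i<M. \<forall>j\<in>J. real j ^ i = (\<Sum>r\<in>R. c i r * G r j)"
  shows False
proof -
  define a where "a i = (\<lambda>j. if j \<in> J then real j ^ i else 0)" for i
  define g where "g r = (\<lambda>j. if j \<in> J then G r j else 0)" for r
  have ain: "a i = (\<Sum>r\<in>R. (\<lambda>j. c i r * g r j))" if "i < M" for i
    unfolding fun_eq_iff fsum_apply using eq that by (auto simp: a_def g_def)
  have sp: "a ` {..<M} \<subseteq> fv.span (g ` R)"
  proof
    fix x assume "x \<in> a ` {..<M}"
    then obtain i where i: "i < M" "x = a i" by auto
    show "x \<in> fv.span (g ` R)" unfolding i ain[OF i(1)]
      by (intro fv.span_sum fv.span_scale fv.span_base) auto
  qed
  have key: "\<forall>i<M. lam i = 0" if "(\<Sum>i\<in>I. (\<lambda>j. lam i * a i j)) = 0" "I \<subseteq> {..<M}" "\<forall>i\<in>{..<M}-I. lam i = 0" for lam I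
  proof (rule vander_zero[OF assms(1,2)], intro ballI)
    fix j assume j: "j \<in> J"
    have "(\<Sum>i<M. lam i * real j ^ i) = (\<Sum>i\<in>I. lam i * real j ^ i)"
      using that(2,3) by (intro sum.mono_neutral_right) auto
    also have "\<dots> = (\<Sum>i\<in>I. (\<lambda>j. lam i * a i j)) j" using j by (simp add: fsum_apply a_def)
    also have "\<dots> = 0" using that(1) by simp
    finally show "(\<Sum>i<M. lam i * real j ^ i) = 0" .
  qed
  have inj: "inj_on a {..<M}"
  proof (rule inj_onI, rule ccontr)
    fix i k assume ik: "i \<in> {..<M}" "k \<in> {..<M}" "a i = a k" "i \<noteq> k"
    define lam where "lam x = (if x = i then 1 else if x = k then -1 else (0::real))" for x
    have "(\<Sum>x\<in>{i,k}. (\<lambda>j. lam x * a x j)) = 0" using ik by (auto simp: lam_def fun_eq_iff)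
    from key[OF this] ik show False by (auto simp: lam_def)
  qed
  have ind: "fv.independent (a ` {..<M})"
    unfolding fv.independent_explicit_finite_subsets
  proof (intro allI impI ballI)
    fix S u v assume S: "S \<subseteq> a ` {..<M}" "finite S" and s0: "(\<Sum>v\<in>S. (\<lambda>j. u v * v j)) = 0" and v: "v \<in> S"
    define I where "I = {i\<in>{..<M}. a i \<in> S}"
    have SI: "S = a ` I" using S(1) by (auto simp: I_def)
    have injI: "inj_on a I" using inj by (rule inj_on_subset) (auto simp: I_def)
    define lam where "lam i = (if i \<in> I then u (a i) else 0)" for i
    have "(\<Sum>i\<in>I. (\<lambda>j. lam i * a i j)) = 0"
      using s0 unfolding SI sum.reindex[OF injI] by (simp add: o_def lam_def)
    have "I \<subseteq> {..<M}" "\<forall>i\<in>{..<M}-I. lam i = 0" by (auto simp: I_def lam_def)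
    from key[OF \<open>(\<Sum>i\<in>I. (\<lambda>j. lam i * a i j)) = 0\<close> this] have "\<forall>i<M. lam i = 0" .
    then have "\<forall>i\<in>I. u (a i) = 0" by (auto simp: I_def lam_def)
    then show "u v = 0" using v SI by auto
  qed
  from fv.independent_span_bound[OF _ ind sp] assms(3)
  have "card (a ` {..<M}) \<le> card (g ` R)" by auto
  also have "\<dots> \<le> card R" by (rule card_image_le[OF assms(3)])
  finally show False using card_image[OF inj] assms(4) by simp
qed
lemma card_filter_sum: "finite A \<Longrightarrow> real (card {x\<in>A. Q x}) = (\<Sum>x\<in>A. if Q x then 1 else 0)"
proof -
  assume fA: "finite A"
  have "real (card {x\<in>A. Q x}) = (\<Sum>x\<in>{x\<in>A. Q x}. (1::real))" by simp
  also have "\<dots> = (\<Sum>x\<in>A. if Q x then 1 else 0)" by (rule sum.inter_filter[OF fA])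
  finally show ?thesis .
qed

lemma main:
  fixes F :: "nat \<Rightarrow> nat \<Rightarrow> real"
  assumes N: "0 < N" and M: "1 < M" "M \<le> K" "K \<le> P"
    and rec: "K_recovers (\<lambda>i j. real j ^ i) F M K P N"
  shows "avg_sparsity F P N > real N / real P * (real P - real K + real M)
           - real M ^ 2 / real P * real (P choose (K - M + 1))"
proof -
  define Z where "Z j = {p\<in>{..<P}. F p j = 0}" for j
  define nz where "nz j = {p\<in>{..<P}. F p j \<noteq> 0}" for j
  have recs: "\<And>chi. chi \<subseteq> {..<P} \<Longrightarrow> card chi = K \<Longrightarrow> rows_span F chi (\<lambda>i j. real j ^ i) M N"
    using rec unfolding K_recovers_def by blast
  have s1: "card (Z j) \<le> K - 1" if j: "j < N" for j
  proof (rule ccontr)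
    assume "\<not> card (Z j) \<le> K - 1"
    then have "K \<le> card (Z j)" by simp
    then obtain chi where chi: "chi \<subseteq> Z j" "card chi = K" "finite chi" by (rule obtain_subset_with_card_n)
    have "chi \<subseteq> {..<P}" using chi by (auto simp: Z_def)
    from recs[OF this chi(2)] M obtain c where "\<forall>j<N. real j ^ 0 = (\<Sum>p\<in>chi. c p * F p j)"
      unfolding rows_span_def by force
    with j have "1 = (\<Sum>p\<in>chi. c p * F p j)" by simp
    also have "\<dots> = 0" using chi by (intro sum.neutral) (auto simp: Z_def)
    finally show False by simp
  qed
  define Ts where "Ts = {T. T \<subseteq> {..<P} \<and> card T = K - M + 1}"
  define JT where "JT T = {j\<in>{..<N}. T \<subseteq> Z j}" for T
  have s2: "card (JT T) \<le> M - 1" if T: "T \<in> Ts" for T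
  proof (rule ccontr)
    assume "\<not> card (JT T) \<le> M - 1"
    then have cJ: "M \<le> card (JT T)" by simp
    have Tsub: "T \<subseteq> {..<P}" and cT: "card T = K - M + 1" using T by (auto simp: Ts_def)
    have fT: "finite T" using Tsub finite_subset by blast
    have "card ({..<P} - T) = P - (K - M + 1)" using Tsub fT cT by (simp add: card_Diff_subset)
    then have "M - 1 \<le> card ({..<P} - T)" using M by simp
    then obtain R where R: "R \<subseteq> {..<P} - T" "card R = M - 1" "finite R" by (rule obtain_subset_with_card_n)
    have "card (T \<union> R) = K" using R fT cT M by (subst card_Un_disjoint) auto
    moreover have "T \<union> R \<subseteq> {..<P}" using R Tsub by auto
    ultimately have "rows_span F (T \<union> R) (\<lambda>i j. real j ^ i) M N" using recs by blast
    then have "\<forall>i\<in>{..<M}. \<exists>c. \<forall>j<N. real j ^ i = (\<Sum>p\<in>T \<union> R. c p * F p j)"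
      unfolding rows_span_def by simp
    from bchoice[OF this] obtain cc where cc0: "\<forall>i\<in>{..<M}. \<forall>j<N. real j ^ i = (\<Sum>p\<in>T \<union> R. cc i p * F p j)"
      by blast
    then have cc: "\<forall>i<M. \<forall>j<N. real j ^ i = (\<Sum>p\<in>T \<union> R. cc i p * F p j)" by simp
    have eq: "\<forall>i<M. \<forall>j\<in>JT T. real j ^ i = (\<Sum>r\<in>R. cc i r * F r j)"
    proof (intro allI impI ballI)
      fix i j assume i: "i < M" and j: "j \<in> JT T"
      have "real j ^ i = (\<Sum>p\<in>T \<union> R. cc i p * F p j)" using cc i j by (auto simp: JT_def)
      also have "\<dots> = (\<Sum>p\<in>T. cc i p * F p j) + (\<Sum>p\<in>R. cc i p * F p j)"
        using R fT by (intro sum.union_disjoint) auto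
      also have "(\<Sum>p\<in>T. cc i p * F p j) = 0" using j by (intro sum.neutral) (auto simp: JT_def Z_def)
      finally show "real j ^ i = (\<Sum>r\<in>R. cc i r * F r j)" by simp
    qed
    show False
      by (rule rank_lemma[OF _ cJ R(3) _ eq]) (use R M in \<open>auto simp: JT_def\<close>)
  qed
  define B where "B = {j\<in>{..<N}. K - M + 1 \<le> card (Z j)}"
  have BU: "B \<subseteq> (\<Union>T\<in>Ts. JT T)"
  proof
    fix j assume "j \<in> B"
    then have j: "j < N" "K - M + 1 \<le> card (Z j)" by (auto simp: B_def)
    from j(2) obtain T where "T \<subseteq> Z j" "card T = K - M + 1" "finite T" by (rule obtain_subset_with_card_n)
    then have "T \<in> Ts" "j \<in> JT T" using j by (auto simp: Ts_def JT_def Z_def)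
    then show "j \<in> (\<Union>T\<in>Ts. JT T)" by blast
  qed
  have fTs: "finite Ts" unfolding Ts_def by (rule finite_subset[of _ "Pow {..<P}"]) auto
  have cTs: "card Ts = P choose (K - M + 1)" unfolding Ts_def using n_subsets[of "{..<P}" "K - M + 1"] by simp
  have "card B \<le> card (\<Union>T\<in>Ts. JT T)"
    by (rule card_mono[OF _ BU]) (use fTs in \<open>auto simp: JT_def\<close>)
  also have "\<dots> \<le> (\<Sum>T\<in>Ts. card (JT T))" by (rule card_UN_le[OF fTs])
  also have "\<dots> \<le> card Ts * (M - 1)" using s2 sum_bounded_above[of Ts "\<lambda>T. card (JT T)" "M - 1"] by (simp add: mult.commute)
  finally have cB: "card B \<le> (P choose (K - M + 1)) * (M - 1)" using cTs by simp
  have col: "real (card (nz j)) \<ge> (real P - real K + real M) - (real M - 1) * (if j \<in> B then 1 else 0)"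
    if j: "j < N" for j
  proof -
    have "nz j = {..<P} - Z j" by (auto simp: nz_def Z_def)
    moreover have "Z j \<subseteq> {..<P}" by (auto simp: Z_def)
    ultimately have "card (nz j) = P - card (Z j)" by (simp add: card_Diff_subset finite_subset)
    moreover have "card (Z j) \<le> P" using card_mono[of "{..<P}" "Z j"] by (auto simp: Z_def)
    ultimately have e: "real (card (nz j)) = real P - real (card (Z j))" by simp
    show ?thesis
    proof (cases "j \<in> B")
      case True
      with s1[OF j] M show ?thesis unfolding e by simp
    next
      case False
      then have "card (Z j) \<le> K - M" using j by (auto simp: B_def)
      then have "real (card (Z j)) \<le> real (K - M)" by (simp only: of_nat_le_iff)
      then have "real (card (Z j)) \<le> real K - real M" using M by (simp add: of_nat_diff)
      with False show ?thesis unfolding e by simp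
    qed
  qed
  have rs: "real (row_sparsity F N p) = (\<Sum>j<N. if F p j \<noteq> 0 then 1 else 0)" for p
  proof -
    have "{j. j < N \<and> F p j \<noteq> 0} = {j\<in>{..<N}. F p j \<noteq> 0}" by auto
    then show ?thesis unfolding row_sparsity_def using card_filter_sum[of "{..<N}" "\<lambda>j. F p j \<noteq> 0"] by simp
  qed
  have tot: "(\<Sum>p<P. real (row_sparsity F N p)) = (\<Sum>j<N. real (card (nz j)))"
    unfolding rs nz_def card_filter_sum[OF finite_lessThan] by (rule sum.swap)
  have "(\<Sum>j<N. real (card (nz j))) \<ge> (\<Sum>j<N. (real P - real K + real M) - (real M - 1) * (if j \<in> B then 1 else 0))"
    using col by (intro sum_mono) auto
  also have "(\<Sum>j<N. (real P - real K + real M) - (real M - 1) * (if j \<in> B then 1 else 0))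
      = real N * (real P - real K + real M) - (real M - 1) * real (card B)"
  proof -
    have "B = {j\<in>{..<N}. j \<in> B}" by (auto simp: B_def)
    then have "real (card B) = (\<Sum>j<N. if j \<in> B then 1 else 0)" using card_filter_sum[of "{..<N}" "\<lambda>j. j \<in> B"] by simp
    then show ?thesis by (simp add: sum_subtractf sum_distrib_left)
  qed
  finally have t1: "(\<Sum>p<P. real (row_sparsity F N p)) \<ge> real N * (real P - real K + real M) - (real M - 1) * real (card B)"
    using tot by simp
  define C where "C = real (P choose (K - M + 1))"
  have Cpos: "C \<ge> 1" unfolding C_def using M by (simp add: Suc_leI zero_less_binomial)
  have "real (card B) \<le> real ((P choose (K - M + 1)) * (M - 1))" using cB by (simp only: of_nat_le_iff)
  also have "\<dots> = C * (real M - 1)" using M unfolding C_def by (simp add: of_nat_diff)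
  finally have "real (card B) \<le> C * (real M - 1)" .
  then have "(real M - 1) * real (card B) \<le> (real M - 1) * (C * (real M - 1))"
    using M by (intro mult_left_mono) auto
  moreover have "(real M - 1) * (C * (real M - 1)) < real M ^ 2 * C"
  proof -
    have "(real M - 1) * (real M - 1) < real M ^ 2" using M by (simp add: power2_eq_square algebra_simps)
    then have "(real M - 1) * (real M - 1) * C < real M ^ 2 * C" using Cpos by (intro mult_strict_right_mono) auto
    then show ?thesis by (simp add: algebra_simps)
  qed
  ultimately have t2: "(\<Sum>p<P. real (row_sparsity F N p)) > real N * (real P - real K + real M) - real M ^ 2 * C"
    using t1 by linarith
  have Ppos: "real P > 0" using M by simp
  have "real N / real P * (real P - real K + real M) - real M ^ 2 / real P * C
     = (real N * (real P - real K + real M) - real M ^ 2 * C) / real P" using Ppos by (simp add: field_simps)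
  also have "\<dots> < (\<Sum>p<P. real (row_sparsity F N p)) / real P" using t2 Ppos by (intro divide_strict_right_mono) auto
  finally show ?thesis unfolding avg_sparsity_def C_def .
qed

theorem theorem3:
  shows "(\<forall>M K P N :: nat. 0 < N \<and> 1 < M \<and> M \<le> K \<and> K \<le> P \<longrightarrow>
      (\<exists>A. \<forall>F. K_recovers A F M K P N \<longrightarrow>
         avg_sparsity F P N > real N / real P * (real P - real K + real M)
           - real M ^ 2 / real P * real (P choose (K - M + 1))))
   \<and>
   (\<forall>Ms Ks Ps :: nat \<Rightarrow> nat.
      (\<forall>N>0. 1 < Ms N \<and> Ms N \<le> Ks N \<and> Ks N \<le> Ps N) \<and>
      (\<lambda>N. real (Ms N) ^ 2 * real (Ps N choose (Ks N - Ms N + 1))) \<in> o(\<lambda>N. real N)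
      \<longrightarrow>
      (\<exists>(As :: nat \<Rightarrow> nat \<Rightarrow> nat \<Rightarrow> real) (g :: nat \<Rightarrow> real).
         g \<in> o(\<lambda>N. real N / real (Ps N)) \<and>
         (\<forall>N>0. \<forall>F. K_recovers (As N) F (Ms N) (Ks N) (Ps N) N \<longrightarrow>
            avg_sparsity F (Ps N) N > real N / real (Ps N) * (real (Ps N) - real (Ks N) + real (Ms N)) - g N)))"
proof (intro conjI allI impI)
  fix M K P N :: nat
  assume h: "0 < N \<and> 1 < M \<and> M \<le> K \<and> K \<le> P"
  show "\<exists>A. \<forall>F. K_recovers A F M K P N \<longrightarrow>
         avg_sparsity F P N > real N / real P * (real P - real K + real M)
           - real M ^ 2 / real P * real (P choose (K - M + 1))"
  proof (intro exI[of _ "\<lambda>i j. real j ^ i"] allI impI)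
    fix F assume r: "K_recovers (\<lambda>i j. real j ^ i) F M K P N"
    have c: "0 < N" "1 < M" "M \<le> K" "K \<le> P" using h by auto
    show "avg_sparsity F P N > real N / real P * (real P - real K + real M)
           - real M ^ 2 / real P * real (P choose (K - M + 1))" by (rule main[OF c r])
  qed
next
  fix Ms Ks Ps :: "nat \<Rightarrow> nat"
  assume h: "(\<forall>N>0. 1 < Ms N \<and> Ms N \<le> Ks N \<and> Ks N \<le> Ps N) \<and>
      (\<lambda>N. real (Ms N) ^ 2 * real (Ps N choose (Ks N - Ms N + 1))) \<in> o(\<lambda>N. real N)"
  define g where "g = (\<lambda>N. real (Ms N) ^ 2 * real (Ps N choose (Ks N - Ms N + 1)) / real (Ps N))"
  have h1: "\<forall>N>0. 1 < Ms N \<and> Ms N \<le> Ks N \<and> Ks N \<le> Ps N" using h by (rule conjunct1)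
  have h2: "(\<lambda>N. real (Ms N) ^ 2 * real (Ps N choose (Ks N - Ms N + 1))) \<in> o(\<lambda>N. real N)"
    using h by (rule conjunct2)
  have "\<forall>N\<ge>1. real (Ps N) \<noteq> 0"
  proof (intro allI impI)
    fix N :: nat assume "N \<ge> 1"
    then have "1 < Ms N" "Ms N \<le> Ks N" "Ks N \<le> Ps N" using h1 by auto
    then show "real (Ps N) \<noteq> 0" by simp
  qed
  then have ev: "eventually (\<lambda>N. real (Ps N) \<noteq> 0) at_top"
    unfolding eventually_at_top_linorder by blast
  have G1: "g \<in> o(\<lambda>N. real N / real (Ps N))"
    unfolding g_def by (rule landau_o.small.divide_right[OF ev h2])
  have G2: "\<forall>N>0. \<forall>F. K_recovers (\<lambda>i j. real j ^ i) F (Ms N) (Ks N) (Ps N) N \<longrightarrow>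
            avg_sparsity F (Ps N) N > real N / real (Ps N) * (real (Ps N) - real (Ks N) + real (Ms N)) - g N"
  proof (intro allI impI)
    fix N :: nat and F assume N: "0 < N" and r: "K_recovers (\<lambda>i j. real j ^ i) F (Ms N) (Ks N) (Ps N) N"
    have c: "1 < Ms N" "Ms N \<le> Ks N" "Ks N \<le> Ps N" using h1 N by auto
    have e: "real (Ms N) ^ 2 / real (Ps N) * real (Ps N choose (Ks N - Ms N + 1)) = g N"
      unfolding g_def by simp
    from main[OF N c r] show "avg_sparsity F (Ps N) N > real N / real (Ps N) * (real (Ps N) - real (Ks N) + real (Ms N)) - g N"
      unfolding e .
  qed
  show "\<exists>(As :: nat \<Rightarrow> nat \<Rightarrow> nat \<Rightarrow> real) (g :: nat \<Rightarrow> real).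
         g \<in> o(\<lambda>N. real N / real (Ps N)) \<and>
         (\<forall>N>0. \<forall>F. K_recovers (As N) F (Ms N) (Ks N) (Ps N) N \<longrightarrow>
            avg_sparsity F (Ps N) N > real N / real (Ps N) * (real (Ps N) - real (Ks N) + real (Ms N)) - g N)"
    by (intro exI[of _ "\<lambda>N i j. real j ^ i"] exI[of _ g] conjI G1 G2)
qed

end
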